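(* Let $m\ge 1$ and let $\pi_1,\dots,\pi_m$ be positive integers with $n=\pi_1+\dots+\pi_m$. Let $\bm{A}=\mathrm{blkdiag}(\bm{A}^{(1)},\dots,\bm{A}^{(m)})\in\mathbb{R}^{n\times n}$ and $\bm{B}=\mathrm{blkdiag}(\bm{e}^{\pi_1}_{\pi_1},\dots,\bm{e}^{\pi_m}_{\pi_m})\in\mathbb{R}^{n\times m}$ be as described in the context, and for real numbers $s<t$ let $$\bm{M}_{ts}=\int_s^t e^{\bm{A}(t-\tau)}\bm{B}\bm{B}^\top e^{\bm{A}^\top(t-\tau)}\,d\tau$$ be the controllability Gramian on $[s,t]$. Then $\bm{M}_{ts}=\mathrm{blkdiag}(\bm{M}^{(1)}_{ts},\dots,\bm{M}^{(m)}_{ts})$ with $\bm{M}^{(k)}_{ts}\in\mathbb{R}^{\pi_k\times\pi_k}$, and: (i) $\displaystyle \det(\bm{M}_{ts})=\prod_{k=1}^m\Big\{(t-s)^{\pi_k^2}\prod_{r=1}^{\pi_k}\frac{\Gamma(r)}{\Gamma(\pi_k+r)}\Big\}$; (ii) $\bm{M}_{ts}^{-1}=\mathrm{blkdiag}\big((\bm{M}^{(1)}_{ts})^{-1},\dots,(\bm{M}^{(m)}_{ts})^{-1}\big)$, where for each $k\in\{1,\dots,m\}$ and $i,j\in\{1,\dots,\pi_k\}$, $$\Big[(\bm{M}^{(k)}_{ts})^{-1}\Big]_{ij}=\frac{(\pi_k-i)!\,(\pi_k-j)!}{(2\pi_k-i-j+1)\,(t-s)^{2\pi_k-i-j+1}}\cdot\frac{\prod_{r=1}^{\pi_k}(2\pi_k-i-r+1)(2\pi_k-j-r+1)}{\Big(\prod_{r=1,\,r\ne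 i}^{\pi_k}(r-i)\Big)\Big(\prod_{r=1,\,r\ne j}^{\pi_k}(r-j)\Big)}.$$
   Context: $\bm{e}^d_i$ denotes the $i$-th standard basis vector of $\mathbb{R}^d$, and $\bm{0}$ a zero column vector. For each $k$, $\bm{A}^{(k)}=[\bm{0}\mid \bm{e}^{\pi_k}_1\mid \bm{e}^{\pi_k}_2\mid\cdots\mid \bm{e}^{\pi_k}_{\pi_k-1}]\in\mathbb{R}^{\pi_k\times\pi_k}$ (i.e., the nilpotent shift matrix with ones on the superdiagonal; for $\pi_k=1$ it is the $1\times1$ zero matrix). $\mathrm{blkdiag}$ denotes the block-diagonal matrix with the given diagonal blocks. The pair $(\bm{A},\bm{B})$ is the Brunovsky normal form $\dot{\bm z}=\bm A\bm z+\bm B\tilde{\bm u}$ with vector relative degree $(\pi_1,\dots,\pi_m)$. $\Gamma$ is the Gamma function, $\Gamma(n)=(n-1)!$ for positive integers $n$. *)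

theory Defs
  imports "HOL-Analysis.Analysis" "Jordan_Normal_Form.Determinant"
begin

definition shift_block :: "nat \<Rightarrow> real mat" where
  "shift_block p = mat p p (\<lambda>(i,j). if j = i + 1 then 1 else 0)"

definition last_basis_col :: "nat \<Rightarrow> real mat" where
  "last_basis_col p = mat p 1 (\<lambda>(i,j). if i = p - 1 then 1 else 0)"

definition brun_A :: "nat list \<Rightarrow> real mat" where
  "brun_A ps = diag_block_mat (map shift_block ps)"

definition brun_B :: "nat list \<Rightarrow> real mat" where
  "brun_B ps = diag_block_mat (map last_basis_col ps)"

definition mat_exp :: "real mat \<Rightarrow> real mat" where
  "mat_exp M = mat (dim_row M) (dim_col M)
      (\<lambda>(i,j). \<Sum>k. (M ^\<^sub>m k) $$ (i,j) / fact k)"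

definition gramian :: "real mat \<Rightarrow> real mat \<Rightarrow> real \<Rightarrow> real \<Rightarrow> real mat" where
  "gramian A B t s = mat (dim_row A) (dim_row A)
      (\<lambda>(i,j). integral {s..t} (\<lambda>\<tau>.
         (mat_exp ((t - \<tau>) \<cdot>\<^sub>m A) * B * transpose_mat B
            * mat_exp ((t - \<tau>) \<cdot>\<^sub>m transpose_mat A)) $$ (i,j)))"

definition inv_block :: "nat \<Rightarrow> real \<Rightarrow> real \<Rightarrow> real mat" where
  "inv_block p t s = mat p p (\<lambda>(a,b). let i = a + 1; j = b + 1 in
     (fact (p - i) * fact (p - j)
        / (real (2*p - i - j + 1) * (t - s) ^ (2*p - i - j + 1)))
     * ((\<Prod>r=1..p. real (2*p - i - r + 1) * real (2*p - j - r + 1))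
        / ((\<Prod>r\<in>{1..p} - {i}. real r - real i) * (\<Prod>r\<in>{1..p} - {j}. real r - real j))))"

end

theory Submission
  imports Defs
begin


lemma lagrange_interp:
  fixes q :: "real poly" and z :: "nat \<Rightarrow> real"
  assumes inj: "inj_on z {..<n}" and deg: "degree q < n"
  shows "poly q x = (\<Sum>c<n. poly q (z c) * (\<Prod>u\<in>{..<n}-{c}. (x - z u) / (z c - z u)))"
proof -
  define L where "L = (\<Sum>c<n. Polynomial.smult (poly q (z c) / (\<Prod>u\<in>{..<n}-{c}. (z c - z u)))
                          (\<Prod>u\<in>{..<n}-{c}. [:- z u, 1:]))"
  have degL: "degree L \<le> n - 1"
    unfolding L_def
  proof (intro degree_sum_le)
    fix c assume c: "c \<in> {..<n}"
    have "degree (\<Prod>u\<in>{..<n}-{c}. [:- z u, 1:]) \<le> sum (degree \<circ> (\<lambda>u. [:- z u, 1:])) ({..<n}-{c})"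
      by (rule degree_prod_sum_le) auto
    also have "\<dots> = card ({..<n}-{c})" by simp
    also have "\<dots> = n - 1" using c by simp
    finally show "degree (Polynomial.smult (poly q (z c) / (\<Prod>u\<in>{..<n}-{c}. (z c - z u)))
                          (\<Prod>u\<in>{..<n}-{c}. [:- z u, 1:])) \<le> n - 1"
      using degree_smult_le order_trans by blast
  qed simp
  have polyL: "poly L x = (\<Sum>c<n. poly q (z c) * (\<Prod>u\<in>{..<n}-{c}. (x - z u) / (z c - z u)))" for x
    unfolding L_def poly_sum poly_smult poly_prod
    by (intro sum.cong refl) (simp add: prod_dividef)
  have nodes: "poly L (z d) = poly q (z d)" if d: "d < n" for d
  proof -
    have "poly L (z d) = (\<Sum>c<n. if c = d then poly q (z d) else 0)"
      unfolding polyL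
    proof (intro sum.cong refl)
      fix c assume c: "c \<in> {..<n}"
      show "poly q (z c) * (\<Prod>u\<in>{..<n}-{c}. (z d - z u) / (z c - z u)) = (if c = d then poly q (z d) else 0)"
      proof (cases "c = d")
        case True
        have "(\<Prod>u\<in>{..<n}-{c}. (z d - z u) / (z c - z u)) = (\<Prod>u\<in>{..<n}-{c}. 1)"
        proof (intro prod.cong refl)
          fix u assume u: "u \<in> {..<n}-{c}"
          have "z c \<noteq> z u" using inj u c by (auto dest: inj_onD)
          thus "(z d - z u) / (z c - z u) = 1" using True by simp
        qed
        thus ?thesis using True by simp
      next
        case False
        have "(\<Prod>u\<in>{..<n}-{c}. (z d - z u) / (z c - z u)) = 0"
          by (rule prod_zero) (use False d in auto)
        thus ?thesis using False by simp
      qed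
    qed
    thus ?thesis using d by simp
  qed
  have "q = L"
  proof (rule poly_eqI_degree[of "z ` {..<n}"])
    fix y assume "y \<in> z ` {..<n}"
    then obtain d where "d < n" "y = z d" by auto
    thus "poly q y = poly L y" using nodes by simp
  next
    have "card (z ` {..<n}) = n" using inj card_image by fastforce
    thus "degree q < card (z ` {..<n})" "degree L < card (z ` {..<n})" using deg degL by auto
  qed
  from polyL[of x] show ?thesis unfolding \<open>q = L\<close>[symmetric] .
qed



lemma prod_shift_fact: "(\<Prod>u<p. real c + 1 + real u) = fact (c + p) / fact c"
proof (induction p)
  case 0 then show ?case by simp
next
  case (Suc p)
  have "(\<Prod>u<Suc p. real c + 1 + real u) = fact (c + p) / fact c * (real c + 1 + real p)"
    using Suc by simp
  also have "\<dots> = fact (c + Suc p) / fact c" by (simp add: algebra_simps)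
  finally show ?case .
qed

lemma prod_neg_fact: "(\<Prod>u<c. real u - real c) = (-1)^c * fact c"
proof -
  have "(\<Prod>u<c. real u - real c) = (\<Prod>u<c. (-1) * real (c - u))"
    by (intro prod.cong refl) (auto simp: of_nat_diff)
  also have "\<dots> = (\<Prod>u<c. (-1::real)) * (\<Prod>u<c. real (c - u))" by (rule prod.distrib)
  also have "(\<Prod>u<c. real (c - u)) = fact c"
    by (simp only: fact_prod_rev atLeast0LessThan of_nat_prod)
  finally show ?thesis by simp
qed

lemma prod_diff_fact:
  assumes "c < p"
  shows "(\<Prod>u\<in>{..<p}-{c}. real u - real c) = (-1)^c * fact c * fact (p - 1 - c)"
  using assms
proof (induction p)
  case 0 then show ?case by simp
next
  case (Suc p)
  show ?case
  proof (cases "c = p")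
    case True
    have "{..<Suc p} - {c} = {..<c}" using True by auto
    thus ?thesis using prod_neg_fact True by simp
  next
    case False
    hence cp: "c < p" using Suc by simp
    have "{..<Suc p} - {c} = insert p ({..<p} - {c})" using cp by auto
    hence "(\<Prod>u\<in>{..<Suc p}-{c}. real u - real c) = (real p - real c) * (\<Prod>u\<in>{..<p}-{c}. real u - real c)"
      by simp
    also have "\<dots> = (real p - real c) * ((-1)^c * fact c * fact (p - 1 - c))" using Suc.IH cp by simp
    also have "\<dots> = (-1)^c * fact c * fact (Suc p - 1 - c)"
    proof -
      have "Suc p - 1 - c = Suc (p - 1 - c)" using cp by simp
      moreover have "real p - real c = real (Suc (p - 1 - c))" using cp by (simp add: of_nat_diff)
      ultimately show ?thesis by (simp add: algebra_simps)
    qed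
    finally show ?thesis .
  qed
qed



definition wgt :: "nat \<Rightarrow> nat \<Rightarrow> real" where
  "wgt p c = (-1)^c * fact (c + p) / (fact c ^ 2 * fact (p - 1 - c))"

lemma prod_neg_card: "finite A \<Longrightarrow> (\<Prod>u\<in>A. - (f u :: real)) = (-1)^card A * (\<Prod>u\<in>A. f u)"
  by (induction A rule: finite_induct) auto

lemma wgt_coeff:
  assumes a: "a < p" and c: "c < p"
  shows "(-1)^(p+1) * (\<Prod>u\<in>{..<p}-{a}. - (real c + 1) - real u) / (\<Prod>u\<in>{..<p}-{c}. real u - real c)
       = wgt p c / (real a + real c + 1)"
proof -
  have e1: "(\<Prod>u\<in>{..<p}-{a}. - (real c + 1) - real u) = (-1)^(p-1) * (\<Prod>u\<in>{..<p}-{a}. real c + 1 + real u)"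
    using prod_neg_card[of "{..<p}-{a}" "\<lambda>u. real c + 1 + real u"] a by (simp add: algebra_simps)
  have e2: "(\<Prod>u<p. real c + 1 + real u) = (real c + 1 + real a) * (\<Prod>u\<in>{..<p}-{a}. real c + 1 + real u)"
    using a by (subst prod.remove[of _ a]) auto
  have e3: "(\<Prod>u\<in>{..<p}-{a}. real c + 1 + real u) = fact (c + p) / fact c / (real c + 1 + real a)"
  proof -
    have k: "real c + 1 + real a \<noteq> 0" by simp
    have "fact (c + p) / fact c = (real c + 1 + real a) * (\<Prod>u\<in>{..<p}-{a}. real c + 1 + real u)"
      using e2 prod_shift_fact[of c p] by simp
    thus ?thesis using k by (metis nonzero_mult_div_cancel_left)
  qed
  have e4: "(\<Prod>u\<in>{..<p}-{c}. real u - real c) = (-1)^c * fact c * fact (p - 1 - c)"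
    using prod_diff_fact[OF c] .
  have s: "(-1::real)^(p+1) * (-1)^(p-1) = 1"
  proof -
    have "(-1::real)^(p+1) * (-1)^(p-1) = (-1)^(p + 1 + (p - 1))" by (simp add: power_add)
    also have "p + 1 + (p - 1) = 2 * p" using a by simp
    finally show ?thesis by simp
  qed
  have s2: "(-1::real)^c * (-1)^c = 1" by (simp flip: power_add)
  show ?thesis
    unfolding e1 e3 e4 wgt_def
    using s by (cases "even c") (simp_all add: field_simps power2_eq_square)
qed


lemma aux_alg:
  fixes P N M D K s q W :: real
  assumes "P = N / M" "D = K * N" "N \<noteq> 0" "K \<noteq> 0" "M \<noteq> 0" "s * q / M = W"
  shows "q * P / D * s = W / K"
  using assms by (simp add: field_simps)

lemma key_sum:
  assumes a: "a < p" and X: "X \<ge> 0"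
  shows "(\<Sum>c<p. wgt p c / ((real a + real c + 1) * (X + real c + 1)))
       = (-1)^(p+1) * (\<Prod>u\<in>{..<p}-{a}. X - real u) / (\<Prod>u<p. X + real u + 1)"
proof -
  define Q where "Q = (\<Prod>u\<in>{..<p}-{a}. [:- real u, 1:])"
  have polyQ: "poly Q y = (\<Prod>u\<in>{..<p}-{a}. y - real u)" for y
    unfolding Q_def by (simp add: poly_prod)
  have degQ: "degree Q < p"
  proof -
    have "degree Q \<le> sum (degree \<circ> (\<lambda>u. [:- real u, 1:])) ({..<p}-{a})"
      unfolding Q_def by (rule degree_prod_sum_le) auto
    also have "\<dots> = p - 1" using a by simp
    finally show ?thesis using a by simp
  qed
  define z where "z c = - (real c + 1)" for c
  have inj: "inj_on z {..<p}" unfolding z_def by (auto intro: inj_onI)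
  define D where "D = (\<Prod>u<p. X + real u + 1)"
  have Dpos: "D > 0" unfolding D_def using X by (intro prod_pos) auto
  have tm: "poly Q (z c) * (\<Prod>u\<in>{..<p}-{c}. (X - z u) / (z c - z u)) / D * (-1)^(p+1)
       = wgt p c / ((real a + real c + 1) * (X + real c + 1))" if c: "c < p" for c
  proof -
    have e1: "(\<Prod>u\<in>{..<p}-{c}. (X - z u) / (z c - z u))
        = (\<Prod>u\<in>{..<p}-{c}. X + real u + 1) / (\<Prod>u\<in>{..<p}-{c}. real u - real c)"
      unfolding z_def by (simp add: prod_dividef algebra_simps)
    have e2: "D = (X + real c + 1) * (\<Prod>u\<in>{..<p}-{c}. X + real u + 1)"
      unfolding D_def using c by (subst prod.remove[of _ c]) auto
    have e3: "(\<Prod>u\<in>{..<p}-{c}. X + real u + 1) \<noteq> 0" using X by (subst prod_zero_iff) auto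
    have e4: "(-1)^(p+1) * poly Q (z c) / (\<Prod>u\<in>{..<p}-{c}. real u - real c)
       = wgt p c / (real a + real c + 1)"
      unfolding polyQ z_def using wgt_coeff[OF a c] by simp
    have e5: "X + real c + 1 \<noteq> 0" using X by simp
    have e6: "(\<Prod>u\<in>{..<p}-{c}. real u - real c) \<noteq> 0" by (subst prod_zero_iff) auto
    have "poly Q (z c) * (\<Prod>u\<in>{..<p}-{c}. (X - z u) / (z c - z u)) / D * (-1)^(p+1)
       = wgt p c / (real a + real c + 1) / (X + real c + 1)"
      by (rule aux_alg[OF e1 e2 e3 e5 e6 e4])
    thus ?thesis by simp
  qed
  have "(-1)^(p+1) * (\<Prod>u\<in>{..<p}-{a}. X - real u) / D = poly Q X / D * (-1)^(p+1)"
    by (simp add: polyQ)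
  also have "\<dots> = (\<Sum>c<p. poly Q (z c) * (\<Prod>u\<in>{..<p}-{c}. (X - z u) / (z c - z u))) / D * (-1)^(p+1)"
    using lagrange_interp[OF inj degQ, of X] by simp
  also have "\<dots> = (\<Sum>c<p. poly Q (z c) * (\<Prod>u\<in>{..<p}-{c}. (X - z u) / (z c - z u)) / D * (-1)^(p+1))"
    by (simp only: sum_divide_distrib sum_distrib_right)
  also have "\<dots> = (\<Sum>c<p. wgt p c / ((real a + real c + 1) * (X + real c + 1)))"
    by (intro sum.cong refl) (rule tm, simp)
  finally show ?thesis unfolding D_def by simp
qed



lemma sum_delta:
  assumes x: "x < p" and y: "y < p"
  shows "(\<Sum>c<p. wgt p c / ((real x + real c + 1) * (real y + real c + 1)))
       = (if x = y then (-1)^x * fact x ^ 2 * fact (p - 1 - x) / fact (x + p) else 0)"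
proof -
  have ks: "(\<Sum>c<p. wgt p c / ((real x + real c + 1) * (real y + real c + 1)))
       = (-1)^(p+1) * (\<Prod>u\<in>{..<p}-{x}. real y - real u) / (\<Prod>u<p. real y + real u + 1)"
    by (rule key_sum[OF x]) simp
  show ?thesis
  proof (cases "x = y")
    case False
    have "(\<Prod>u\<in>{..<p}-{x}. real y - real u) = 0"
      by (rule prod_zero) (use False y in auto)
    thus ?thesis using ks False by simp
  next
    case True
    have e1: "(\<Prod>u\<in>{..<p}-{x}. real x - real u) = (-1)^(p-1) * ((-1)^x * fact x * fact (p - 1 - x))"
    proof -
      have "(\<Prod>u\<in>{..<p}-{x}. real x - real u) = (\<Prod>u\<in>{..<p}-{x}. - (real u - real x))" by simp
      also have "\<dots> = (-1)^card ({..<p}-{x}) * (\<Prod>u\<in>{..<p}-{x}. real u - real x)"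
        by (rule prod_neg_card) simp
      also have "card ({..<p}-{x}) = p - 1" using x by simp
      finally show ?thesis using prod_diff_fact[OF x] by simp
    qed
    have e2: "(\<Prod>u<p. real x + real u + 1) = fact (x + p) / fact x"
      using prod_shift_fact[of x p] by (simp add: algebra_simps)
    have s: "(-1::real)^(p+1) * (-1)^(p-1) = 1"
    proof -
      have "(-1::real)^(p+1) * (-1)^(p-1) = (-1)^(p + 1 + (p - 1))" by (simp add: power_add)
      also have "p + 1 + (p - 1) = 2 * p" using x by simp
      finally show ?thesis by simp
    qed
    have "(-1)^(p+1) * (\<Prod>u\<in>{..<p}-{x}. real x - real u) / (\<Prod>u<p. real x + real u + 1)
        = ((-1)^(p+1) * (-1)^(p-1)) * ((-1)^x * fact x * fact (p - 1 - x)) / (fact (x + p) / fact x)"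
      unfolding e1 e2 by simp
    also have "\<dots> = (-1)^x * fact x ^ 2 * fact (p - 1 - x) / fact (x + p)"
      unfolding s by (simp add: power2_eq_square)
    finally show ?thesis using ks True by simp
  qed
qed


definition Gx :: "real \<Rightarrow> nat \<Rightarrow> nat \<Rightarrow> real" where
  "Gx T x z = T^(x+z+1) / (real (x+z+1) * fact x * fact z)"

definition Nf :: "nat \<Rightarrow> real \<Rightarrow> nat \<Rightarrow> nat \<Rightarrow> real" where
  "Nf p T z y = (-1)^z * (-1)^y * fact (z+p) * fact (y+p)
     / (real (z+y+1) * T^(z+y+1) * fact z * fact (p-1-z) * fact y * fact (p-1-y))"

definition Gm :: "nat \<Rightarrow> real \<Rightarrow> real mat" where
  "Gm p T = mat p p (\<lambda>(i,j). Gx T (p-1-i) (p-1-j))"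

lemma aux2:
  fixes A B E fx fy fz fzp fyp gz gy sh sg dxz dzy :: real
  assumes "B \<noteq> 0" "E \<noteq> 0" "fx \<noteq> 0" "fy \<noteq> 0" "fz \<noteq> 0" "gz \<noteq> 0" "gy \<noteq> 0" "dxz \<noteq> 0" "dzy \<noteq> 0"
  shows "(A * E)/(dxz * fx * fz)  *  (sh  *  sg  * fzp * fyp/(dzy * (B * E) * fz * gz * fy * gy))
       = (A/B * sg * fyp/(fx * fy * gy))  *  (sh * fzp/(fz^2 * gz)/(dxz * dzy))"
  using assms by (simp add: field_simps power2_eq_square)

lemma GN_term:
  fixes T :: real assumes T: "T > 0"
  shows "Gx T x z * Nf p T z y
    = (T^x / T^y * (-1)^y * fact (y+p) / (fact x * fact y * fact (p-1-y)))
      * (wgt p z / (real (x+z+1) * real (z+y+1)))"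
proof -
  have p1: "T^(x+z+1) = T^x * T^(z+1)" by (simp add: power_add)
  have p2: "T^(z+y+1) = T^y * T^(z+1)" by (simp add: power_add)
  show ?thesis unfolding Gx_def Nf_def wgt_def p1 p2
    by (rule aux2) (use T in auto)
qed

lemma GN_sum:
  fixes T :: real assumes T: "T > 0" and x: "x < p" and y: "y < p"
  shows "(\<Sum>z<p. Gx T x z * Nf p T z y) = (if x = y then 1 else 0)"
proof -
  have d: "real (x+z+1) * real (z+y+1) = (real x + real z + 1) * (real y + real z + 1)" for z
    by (simp add: algebra_simps)
  let ?C = "T^x / T^y * (-1)^y * fact (y+p) / (fact x * fact y * fact (p-1-y))"
  have "(\<Sum>z<p. Gx T x z * Nf p T z y)
      = ?C * (\<Sum>z<p. wgt p z / ((real x + real z + 1) * (real y + real z + 1)))"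
    unfolding GN_term[OF T] d sum_distrib_left ..
  also have "\<dots> = ?C * (if x = y then (-1)^x * fact x ^ 2 * fact (p - 1 - x) / fact (x + p) else 0)"
    using sum_delta[OF x y] by (simp add: algebra_simps)
  also have "\<dots> = (if x = y then 1 else 0)"
    using T by (cases "even x") (auto simp: power2_eq_square)
  finally show ?thesis .
qed



lemma prod_rev1:
  assumes i: "i < p"
  shows "(\<Prod>r=1..p. real (2*p - (i+1) - r + 1)) = fact (p-1-i+p) / fact (p-1-i)"
proof -
  have "(\<Prod>r=1..p. real (2*p - (i+1) - r + 1)) = (\<Prod>u<p. real (2*p - (i+1) - (p - u) + 1))"
    by (rule prod.reindex_bij_witness[of _ "\<lambda>r. p - r" "\<lambda>u. p - u"]) auto
  also have "\<dots> = (\<Prod>u<p. real (p-1-i) + 1 + real u)"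
    by (intro prod.cong refl) (use i in \<open>auto simp: of_nat_diff\<close>)
  also have "\<dots> = fact (p-1-i+p) / fact (p-1-i)" by (rule prod_shift_fact)
  finally show ?thesis .
qed

lemma prod_rev2:
  assumes i: "i < p"
  shows "(\<Prod>r\<in>{1..p}-{i+1}. real r - real (i+1)) = (-1)^i * fact i * fact (p-1-i)"
proof -
  have "(\<Prod>r\<in>{1..p}-{i+1}. real r - real (i+1)) = (\<Prod>u\<in>{..<p}-{i}. real (u+1) - real (i+1))"
    by (rule prod.reindex_bij_witness[of _ "\<lambda>u. u + 1" "\<lambda>r. r - 1"]) auto
  also have "\<dots> = (\<Prod>u\<in>{..<p}-{i}. real u - real i)" by simp
  also have "\<dots> = (-1)^i * fact i * fact (p-1-i)" by (rule prod_diff_fact[OF i])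
  finally show ?thesis .
qed

lemma sign_swap:
  assumes "i + x = p - 1" "j + y = p - 1"
  shows "(-1::real)^i * (-1)^j = (-1)^x * (-1)^y"
proof -
  have "even (i + j) \<longleftrightarrow> even (x + y)" using assms by presburger
  thus ?thesis by (cases "even (x+y)") (auto simp flip: power_add)
qed

lemma aux3:
  fixes fx fy gi gj d E Fx Fy si sj sx sy :: real
  assumes s: "si * sj = sx * sy" "sx * sx = 1" "sy * sy = 1"
    and nz: "fx \<noteq> 0" "fy \<noteq> 0" "gi \<noteq> 0" "gj \<noteq> 0" "d \<noteq> 0" "E \<noteq> 0"
  shows "fx * fy / (d * E) * ((Fx / fx) * (Fy / fy) / ((si * gi * fx) * (sj * gj * fy)))
       = sx * sy * Fx * Fy / (d * E * fx * gi * fy * gj)"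
proof -
  have ss: "si * sj \<noteq> 0" using s by auto
  have "fx * fy / (d * E) * ((Fx / fx) * (Fy / fy) / ((si * gi * fx) * (sj * gj * fy)))
      = Fx * Fy / (d * E * fx * gi * fy * gj) / (si * sj)"
    using nz ss by (simp add: field_simps)
  also have "\<dots> = Fx * Fy / (d * E * fx * gi * fy * gj) * (sx * sy)"
  proof -
    have q: "sx * sy * (sx * sy) = 1"
      by (metis mult.assoc mult.left_commute s(2) s(3) mult_1_right)
    show ?thesis unfolding s(1) using q by (simp add: divide_eq_eq mult.assoc)
  qed
  finally show ?thesis by simp
qed

lemma inv_entry:
  assumes i: "i < p" and j: "j < p" and "s < t"
  shows "inv_block p t s $$ (i,j) = Nf p (t-s) (p-1-i) (p-1-j)"
proof -
  define x where "x = p-1-i"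
  define y where "y = p-1-j"
  have ix: "i = p-1-x" "j = p-1-y" using i j unfolding x_def y_def by auto
  have n1: "2*p - (i+1) - (j+1) + 1 = x + y + 1" using i j unfolding x_def y_def by simp
  have n2: "p - (i+1) = x" "p - (j+1) = y" unfolding x_def y_def by auto
  have pr: "(\<Prod>r=1..p. real (2*p - (i+1) - r + 1) * real (2*p - (j+1) - r + 1))
      = (fact (x+p) / fact x) * (fact (y+p) / fact y)"
    unfolding prod.distrib prod_rev1[OF i] prod_rev1[OF j] x_def y_def ..
  have sg: "(-1::real)^i * (-1)^j = (-1)^x * (-1)^y"
    by (rule sign_swap) (use i j in \<open>auto simp: x_def y_def\<close>)
  have "inv_block p t s $$ (i,j) =
     (fact x * fact y / (real (x+y+1) * (t - s) ^ (x+y+1)))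
     * ((fact (x+p) / fact x) * (fact (y+p) / fact y)
        / (((-1)^i * fact i * fact x) * ((-1)^j * fact j * fact y)))"
    unfolding inv_block_def index_mat(1)[OF i j] split Let_def n1 n2 pr
      prod_rev2[OF i] prod_rev2[OF j]
    by (simp only: x_def y_def)
  also have "\<dots> = Nf p (t-s) x y"
    unfolding Nf_def ix(1)[symmetric] ix(2)[symmetric]
  proof (rule aux3)
    show "(-1::real)^i * (-1)^j = (-1)^x * (-1)^y" by (rule sg)
    show "(-1::real)^x * (-1)^x = 1" "(-1::real)^y * (-1)^y = 1" by (simp_all flip: power_add)
    show "fact i \<noteq> (0::real)" "fact j \<noteq> (0::real)" by simp_all
  qed (use \<open>s < t\<close> ix in auto)
  finally show ?thesis unfolding x_def y_def .
qed



lemma Gm_carrier: "Gm p T \<in> carrier_mat p p" unfolding Gm_def by simp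

lemma inv_block_carrier: "inv_block p t s \<in> carrier_mat p p" unfolding inv_block_def by simp

lemma Gm_dims[simp]: "dim_row (Gm p T) = p" "dim_col (Gm p T) = p" unfolding Gm_def by simp_all
lemma inv_block_dims[simp]: "dim_row (inv_block p t s) = p" "dim_col (inv_block p t s) = p"
  unfolding inv_block_def by simp_all

lemma Gm_inv:
  assumes st: "s < t"
  shows "Gm p (t - s) * inv_block p t s = 1\<^sub>m p"
proof (rule eq_matI)
  fix a b assume a: "a < dim_row (1\<^sub>m p)" and b: "b < dim_col (1\<^sub>m p)"
  hence a: "a < p" and b: "b < p" by auto
  have "(Gm p (t - s) * inv_block p t s) $$ (a, b)
      = (\<Sum>k<p. Gx (t-s) (p-1-a) (p - Suc k) * Nf p (t-s) (p - Suc k) (p-1-b))"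
  proof -
    have "(Gm p (t - s) * inv_block p t s) $$ (a, b)
       = (\<Sum>k\<in>{0..<p}. Gm p (t - s) $$ (a,k) * inv_block p t s $$ (k,b))"
      using a b by (subst index_mult_mat(1)) (auto simp: scalar_prod_def)
    also have "\<dots> = (\<Sum>k<p. Gx (t-s) (p-1-a) (p - Suc k) * Nf p (t-s) (p - Suc k) (p-1-b))"
      using a b st by (intro sum.cong) (auto simp: Gm_def inv_entry)
    finally show ?thesis .
  qed
  also have "\<dots> = (\<Sum>z<p. Gx (t-s) (p-1-a) z * Nf p (t-s) z (p-1-b))"
    by (rule sum.nat_diff_reindex)
  also have "\<dots> = (if p-1-a = p-1-b then 1 else 0)"
    by (rule GN_sum) (use a b st in auto)
  also have "\<dots> = 1\<^sub>m p $$ (a,b)" using a b by auto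
  finally show "(Gm p (t - s) * inv_block p t s) $$ (a, b) = 1\<^sub>m p $$ (a,b)" .
qed auto

lemma inv_Gm:
  assumes st: "s < t"
  shows "inv_block p t s * Gm p (t - s) = 1\<^sub>m p"
  by (rule mat_mult_left_right_inverse[OF Gm_carrier inv_block_carrier Gm_inv[OF st]])


lemma mat_delete_Gm: "mat_delete (Gm (Suc p) T) 0 0 = Gm p T"
  by (rule eq_matI) (auto simp: mat_delete_def Gm_def)

lemma det_step:
  assumes st: "s < t"
  shows "Determinant.det (Gm p (t-s)) = Determinant.det (Gm (Suc p) (t-s)) * Nf (Suc p) (t-s) p p"
proof -
  let ?A = "Gm (Suc p) (t-s)" and ?B = "inv_block (Suc p) t s"
  have A: "?A \<in> carrier_mat (Suc p) (Suc p)" by (rule Gm_carrier)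
  have B: "?B \<in> carrier_mat (Suc p) (Suc p)" by (rule inv_block_carrier)
  have adjc: "adj_mat ?A \<in> carrier_mat (Suc p) (Suc p)" by (rule adj_mat(1)[OF A])
  have "adj_mat ?A = adj_mat ?A * (?A * ?B)"
    unfolding Gm_inv[OF st] using adjc by simp
  also have "\<dots> = (adj_mat ?A * ?A) * ?B" using adjc A B by simp
  also have "\<dots> = (Determinant.det ?A \<cdot>\<^sub>m 1\<^sub>m (Suc p)) * ?B" unfolding adj_mat(3)[OF A] ..
  also have "\<dots> = Determinant.det ?A \<cdot>\<^sub>m ?B"
    using B by (simp add: mult_smult_assoc_mat[of _ "Suc p" "Suc p"])
  finally have eq: "adj_mat ?A = Determinant.det ?A \<cdot>\<^sub>m ?B" .
  have "adj_mat ?A $$ (0,0) = Determinant.det (Gm p (t-s))"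
    unfolding adj_mat_def cofactor_def using mat_delete_Gm by simp
  moreover have "(Determinant.det ?A \<cdot>\<^sub>m ?B) $$ (0,0) = Determinant.det ?A * Nf (Suc p) (t-s) p p"
    using inv_entry[of 0 "Suc p" 0 s t] st by simp
  ultimately show ?thesis unfolding eq by simp
qed


definition Pg :: "nat \<Rightarrow> real" where
  "Pg p = (\<Prod>r=1..p. Gamma (real r) / Gamma (real (p + r)))"

lemma Pg_fact: "Pg p = (\<Prod>u<p. fact u) / (\<Prod>u<p. fact (p + u))"
proof -
  have "Pg p = (\<Prod>u<p. Gamma (real (u+1)) / Gamma (real (p + (u+1))))"
    unfolding Pg_def by (rule prod.reindex_bij_witness[of _ "\<lambda>u. u + 1" "\<lambda>r. r - 1"]) auto
  also have "\<dots> = (\<Prod>u<p. fact u / fact (p + u))"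
  proof (intro prod.cong refl)
    fix u
    have "Gamma (real (u+1)) = fact u" using Gamma_fact[of u] by (simp add: add.commute)
    moreover have "Gamma (real (p + (u+1))) = fact (p + u)"
      using Gamma_fact[of "p+u"] by (simp add: add.commute add.left_commute)
    ultimately show "Gamma (real (u+1)) / Gamma (real (p + (u+1))) = fact u / fact (p + u)" by simp
  qed
  also have "\<dots> = (\<Prod>u<p. fact u) / (\<Prod>u<p. fact (p + u))" by (rule prod_dividef)
  finally show ?thesis .
qed

lemma aux4:
  fixes fp D0 D1 N0 Y :: real
  assumes "fp * D1 = D0 * Y" "D0 > 0" "D1 > 0" "fp > 0"
  shows "(N0 * fp) / D1 * Y = N0 / D0 * fp^2"
proof -
  have "Y = fp * D1 / D0" using assms by (simp add: field_simps)
  thus ?thesis using assms by (simp add: field_simps power2_eq_square)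
qed

lemma aux5:
  fixes A B P fp c f2 :: real
  assumes "B \<noteq> 0" "fp \<noteq> 0" "c \<noteq> 0" "f2 \<noteq> 0"
  shows "A * P / ((c * f2)^2 / (c * B * fp^2)) = A * B * (P * fp^2 / (f2 * (c * f2)))"
  using assms by (simp add: field_simps power2_eq_square)

lemma Pg_step: "Pg (Suc p) * (fact (2*p) * fact (2*p+1)) = Pg p * (fact p)^2"
proof -
  have n: "(\<Prod>u<Suc p. fact u :: real) = (\<Prod>u<p. fact u) * fact p" by simp
  have d: "fact p * (\<Prod>u<Suc p. fact (Suc p + u) :: real) = (\<Prod>u<p. fact (p + u)) * (fact (2*p) * fact (2*p+1))"
  proof -
    have "fact p * (\<Prod>u<Suc p. fact (Suc p + u) :: real) = (\<Prod>u<Suc (Suc p). fact (p + u))"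
      by (subst prod.lessThan_Suc_shift) simp
    also have "\<dots> = (\<Prod>u<p. fact (p + u)) * fact (p+p) * fact (p + Suc p)"
      by (simp only: prod.lessThan_Suc)
    also have "p + p = 2*p" by simp
    also have "p + Suc p = 2*p+1" by simp
    finally show ?thesis by (simp only: mult.assoc)
  qed
  have pos1: "(\<Prod>u<p. fact (p + u) :: real) > 0" by (intro prod_pos) auto
  have pos2: "(\<Prod>u<Suc p. fact (Suc p + u) :: real) > 0" by (intro prod_pos) auto
  have fp: "fact p > (0::real)" by simp
  show ?thesis unfolding Pg_fact n
    by (rule aux4[OF d pos1 pos2 fp])
qed

lemma det_Gm:
  assumes st: "s < t"
  shows "Determinant.det (Gm p (t-s)) = (t-s)^(p^2) * Pg p"
proof (induction p)
  case 0
  have "Gm 0 (t-s) \<in> carrier_mat 0 0" by (rule Gm_carrier)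
  thus ?case by (simp add: Pg_def)
next
  case (Suc p)
  let ?T = "t - s"
  have T: "?T > 0" using st by simp
  have nf: "Nf (Suc p) ?T p p = fact (2*p+1)^2 / (real (2*p+1) * ?T^(2*p+1) * (fact p)^2)"
  proof -
    have a1: "Suc p - 1 - p = 0" "p + Suc p = 2*p+1" "p + p + 1 = 2*p+1" by simp_all
    have a2: "(-1::real)^p * (-1)^p = 1" by (simp flip: power_add)
    show ?thesis unfolding Nf_def a1 a2 fact_0 by (simp add: power2_eq_square)
  qed
  have nfnz: "Nf (Suc p) ?T p p \<noteq> 0" unfolding nf using T by simp
  have f: "fact (2*p+1) = real (2*p+1) * fact (2*p)" by simp
  have "Determinant.det (Gm (Suc p) ?T) = Determinant.det (Gm p ?T) / Nf (Suc p) ?T p p"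
    using det_step[OF st, of p] nfnz by simp
  also have "\<dots> = ?T^(p^2) * Pg p / Nf (Suc p) ?T p p" using Suc by simp
  also have "\<dots> = ?T^(Suc p ^ 2) * Pg (Suc p)"
  proof -
    have e: "?T^(Suc p ^ 2) = ?T^(p^2) * ?T^(2*p+1)"
    proof -
      have "Suc p ^ 2 = p^2 + (2*p+1)" by (simp add: power2_eq_square)
      thus ?thesis by (simp only: power_add)
    qed
    have pf: "Pg (Suc p) = Pg p * (fact p)^2 / (fact (2*p) * fact (2*p+1))"
    proof -
      have Y: "fact (2*p) * fact (2*p+1) \<noteq> (0::real)" by (simp del: fact_Suc)
      show ?thesis by (rule nonzero_eq_divide_eq[THEN iffD2, OF Y Pg_step])
    qed
    show ?thesis unfolding e pf nf f
      by (rule aux5) (use T in auto)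
  qed
  finally show ?case .
qed



definition dbl :: "real mat \<Rightarrow> real mat \<Rightarrow> real mat" where
  "dbl X Y = four_block_mat X (0\<^sub>m (dim_row X) (dim_col Y)) (0\<^sub>m (dim_row Y) (dim_col X)) Y"

lemma dbl_dims[simp]: "dim_row (dbl X Y) = dim_row X + dim_row Y" "dim_col (dbl X Y) = dim_col X + dim_col Y"
  unfolding dbl_def by simp_all

lemma dbl_index:
  assumes "i < dim_row X + dim_row Y" "j < dim_col X + dim_col Y"
  shows "dbl X Y $$ (i,j) = (if i < dim_row X then if j < dim_col X then X $$ (i,j) else 0
      else if j < dim_col X then 0 else Y $$ (i - dim_row X, j - dim_col X))"
  unfolding dbl_def using assms by simp

lemma diag_block_Cons: "diag_block_mat (A # As) = dbl A (diag_block_mat As)"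
  by (simp add: dbl_def Let_def)

lemma dbl_smult: "c \<cdot>\<^sub>m dbl X Y = dbl (c \<cdot>\<^sub>m X) (c \<cdot>\<^sub>m Y)"
  by (rule eq_matI) (auto simp: dbl_index)

lemma dbl_transpose: "transpose_mat (dbl X Y) = dbl (transpose_mat X) (transpose_mat Y)"
  by (rule eq_matI) (auto simp: dbl_index)

lemma dbl_mult:
  assumes e1: "dim_col X1 = dim_row X2" and e2: "dim_col Y1 = dim_row Y2"
  shows "dbl X1 Y1 * dbl X2 Y2 = dbl (X1 * X2) (Y1 * Y2)"
proof -
  let ?a = "dim_row X1" and ?b = "dim_col X1" and ?c = "dim_col X2"
  let ?d = "dim_row Y1" and ?e = "dim_col Y1" and ?f = "dim_col Y2"
  have c1: "X1 \<in> carrier_mat ?a ?b" "0\<^sub>m ?a ?e \<in> carrier_mat ?a ?e" "0\<^sub>m ?d ?b \<in> carrier_mat ?d ?b"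
    "Y1 \<in> carrier_mat ?d ?e" by auto
  have c2: "X2 \<in> carrier_mat ?b ?c" "0\<^sub>m ?b ?f \<in> carrier_mat ?b ?f" "0\<^sub>m ?e ?c \<in> carrier_mat ?e ?c"
    "Y2 \<in> carrier_mat ?e ?f" using e1 e2 by (auto intro!: carrier_matI)
  have dX2: "dim_row X2 = ?b" "dim_row Y2 = ?e" using e1 e2 by auto
  have "dbl X1 Y1 * dbl X2 Y2 = four_block_mat (X1 * X2 + 0\<^sub>m ?a ?e * 0\<^sub>m ?e ?c)
      (X1 * 0\<^sub>m ?b ?f + 0\<^sub>m ?a ?e * Y2)
      (0\<^sub>m ?d ?b * X2 + Y1 * 0\<^sub>m ?e ?c)
      (0\<^sub>m ?d ?b * 0\<^sub>m ?b ?f + Y1 * Y2)"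
    unfolding dbl_def dX2 by (rule mult_four_block_mat[OF c1 c2])
  also have "X1 * X2 + 0\<^sub>m ?a ?e * 0\<^sub>m ?e ?c = X1 * X2"
  proof -
    have z: "0\<^sub>m ?a ?e * 0\<^sub>m ?e ?c = 0\<^sub>m ?a ?c" by (rule left_mult_zero_mat) auto
    show ?thesis unfolding z by (rule right_add_zero_mat) auto
  qed
  also have "X1 * 0\<^sub>m ?b ?f + 0\<^sub>m ?a ?e * Y2 = 0\<^sub>m ?a ?f"
    unfolding right_mult_zero_mat[OF c1(1)] left_mult_zero_mat[OF c2(4)] by (rule left_add_zero_mat) auto
  also have "0\<^sub>m ?d ?b * X2 + Y1 * 0\<^sub>m ?e ?c = 0\<^sub>m ?d ?c"
    unfolding left_mult_zero_mat[OF c2(1)] right_mult_zero_mat[OF c1(4)] by (rule left_add_zero_mat) auto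
  also have "0\<^sub>m ?d ?b * 0\<^sub>m ?b ?f + Y1 * Y2 = Y1 * Y2"
  proof -
    have z: "0\<^sub>m ?d ?b * 0\<^sub>m ?b ?f = 0\<^sub>m ?d ?f" by (rule left_mult_zero_mat) auto
    show ?thesis unfolding z by (rule left_add_zero_mat) (auto simp: dX2)
  qed
  finally show ?thesis unfolding dbl_def by simp
qed

lemma dbl_one: "dbl (1\<^sub>m a) (1\<^sub>m b) = 1\<^sub>m (a + b)"
  unfolding dbl_def by simp

lemma dbl_pow:
  assumes "X \<in> carrier_mat n n" "Y \<in> carrier_mat m m"
  shows "dbl X Y ^\<^sub>m k = dbl (X ^\<^sub>m k) (Y ^\<^sub>m k)"
  using pow_four_block_mat[OF assms, of k] assms unfolding dbl_def by simp

lemma mat_exp_dims[simp]: "dim_row (mat_exp M) = dim_row M" "dim_col (mat_exp M) = dim_col M"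
  unfolding mat_exp_def by simp_all

lemma mat_exp_dbl:
  assumes X: "X \<in> carrier_mat n n" and Y: "Y \<in> carrier_mat m m"
  shows "mat_exp (dbl X Y) = dbl (mat_exp X) (mat_exp Y)"
proof (rule eq_matI)
  fix i j assume i: "i < dim_row (dbl (mat_exp X) (mat_exp Y))" and j: "j < dim_col (dbl (mat_exp X) (mat_exp Y))"
  have d: "dim_row X = n" "dim_col X = n" "dim_row Y = m" "dim_col Y = m" using X Y by auto
  have dm: "dim_row (mat_exp X) = n" "dim_col (mat_exp X) = n" "dim_row (mat_exp Y) = m" "dim_col (mat_exp Y) = m"
    unfolding mat_exp_def d by simp_all
  from i j have i: "i < n + m" and j: "j < n + m" by (simp_all add: d)
  have pk: "(dbl X Y ^\<^sub>m k) $$ (i,j) = (if i < n then if j < n then (X ^\<^sub>m k) $$ (i,j) else 0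
      else if j < n then 0 else (Y ^\<^sub>m k) $$ (i - n, j - n))" for k
    unfolding dbl_pow[OF X Y] using i j X Y by (subst dbl_index) auto
  have "mat_exp (dbl X Y) $$ (i,j) = (\<Sum>k. (dbl X Y ^\<^sub>m k) $$ (i,j) / fact k)"
    unfolding mat_exp_def using i j d by simp
  also have "\<dots> = dbl (mat_exp X) (mat_exp Y) $$ (i,j)"
  proof -
    have r: "dbl (mat_exp X) (mat_exp Y) $$ (i,j) = (if i < n then if j < n then mat_exp X $$ (i,j) else 0
      else if j < n then 0 else mat_exp Y $$ (i - n, j - n))"
      using i j by (subst dbl_index) (simp_all only: dm)
    show ?thesis
    proof (cases "i < n")
      case True
      show ?thesis
      proof (cases "j < n")
        case True
        thus ?thesis unfolding pk r using \<open>i < n\<close> by (simp add: mat_exp_def d)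
      next
        case False
        thus ?thesis unfolding pk r using \<open>i < n\<close> by simp
      qed
    next
      case False
      show ?thesis
      proof (cases "j < n")
        case True
        thus ?thesis unfolding pk r using \<open>\<not> i < n\<close> by simp
      next
        case False
        thus ?thesis unfolding pk r using \<open>\<not> i < n\<close> i j by (simp add: mat_exp_def d)
      qed
    qed
  qed
  finally show "mat_exp (dbl X Y) $$ (i,j) = dbl (mat_exp X) (mat_exp Y) $$ (i,j)" .
qed (use X Y in \<open>simp_all add: mat_exp_dims\<close>)



definition integrand :: "real mat \<Rightarrow> real mat \<Rightarrow> real \<Rightarrow> real \<Rightarrow> real mat" where
  "integrand A B t \<tau> = mat_exp ((t - \<tau>) \<cdot>\<^sub>m A) * B * transpose_mat B
            * mat_exp ((t - \<tau>) \<cdot>\<^sub>m transpose_mat A)"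

lemma gramian_index:
  assumes "i < dim_row A" "j < dim_row A"
  shows "gramian A B t s $$ (i,j) = integral {s..t} (\<lambda>\<tau>. integrand A B t \<tau> $$ (i,j))"
  unfolding gramian_def integrand_def using assms by simp

lemma gramian_dims[simp]: "dim_row (gramian A B t s) = dim_row A" "dim_col (gramian A B t s) = dim_row A"
  unfolding gramian_def by simp_all

lemma integrand_dims:
  assumes "A \<in> carrier_mat n n" "B \<in> carrier_mat n k"
  shows "dim_row (integrand A B t \<tau>) = n" "dim_col (integrand A B t \<tau>) = n"
  unfolding integrand_def using assms by auto

lemma integrand_dbl:
  assumes A1: "A1 \<in> carrier_mat n n" and A2: "A2 \<in> carrier_mat m m"
    and B1: "B1 \<in> carrier_mat n k1" and B2: "B2 \<in> carrier_mat m k2"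
  shows "integrand (dbl A1 A2) (dbl B1 B2) t \<tau> = dbl (integrand A1 B1 t \<tau>) (integrand A2 B2 t \<tau>)"
proof -
  let ?c = "t - \<tau>"
  have e1: "mat_exp (?c \<cdot>\<^sub>m dbl A1 A2) = dbl (mat_exp (?c \<cdot>\<^sub>m A1)) (mat_exp (?c \<cdot>\<^sub>m A2))"
    unfolding dbl_smult by (rule mat_exp_dbl) (use A1 A2 in auto)
  have e2: "mat_exp (?c \<cdot>\<^sub>m dbl (transpose_mat A1) (transpose_mat A2))
      = dbl (mat_exp (?c \<cdot>\<^sub>m transpose_mat A1)) (mat_exp (?c \<cdot>\<^sub>m transpose_mat A2))"
    unfolding dbl_smult by (rule mat_exp_dbl) (use A1 A2 in auto)
  show ?thesis
    unfolding integrand_def dbl_transpose e1 e2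
    using A1 A2 B1 B2 by (simp add: dbl_mult)
qed

lemma gramian_dbl:
  assumes A1: "A1 \<in> carrier_mat n n" and A2: "A2 \<in> carrier_mat m m"
    and B1: "B1 \<in> carrier_mat n k1" and B2: "B2 \<in> carrier_mat m k2"
  shows "gramian (dbl A1 A2) (dbl B1 B2) t s = dbl (gramian A1 B1 t s) (gramian A2 B2 t s)"
proof (rule eq_matI)
  fix i j assume i: "i < dim_row (dbl (gramian A1 B1 t s) (gramian A2 B2 t s))"
    and j: "j < dim_col (dbl (gramian A1 B1 t s) (gramian A2 B2 t s))"
  have dA: "dim_row A1 = n" "dim_row A2 = m" using A1 A2 by auto
  from i j have i: "i < n + m" and j: "j < n + m" by (simp_all add: dA)
  have d1: "dim_row (integrand A1 B1 t \<tau>) = n" "dim_col (integrand A1 B1 t \<tau>) = n" for \<tau>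
    using integrand_dims[OF A1 B1] by auto
  have d2: "dim_row (integrand A2 B2 t \<tau>) = m" "dim_col (integrand A2 B2 t \<tau>) = m" for \<tau>
    using integrand_dims[OF A2 B2] by auto
  have ent: "integrand (dbl A1 A2) (dbl B1 B2) t \<tau> $$ (i,j)
     = (if i < n then if j < n then integrand A1 B1 t \<tau> $$ (i,j) else 0
        else if j < n then 0 else integrand A2 B2 t \<tau> $$ (i - n, j - n))" for \<tau>
    unfolding integrand_dbl[OF A1 A2 B1 B2] using i j by (subst dbl_index) (simp_all add: d1 d2)
  have rhs: "dbl (gramian A1 B1 t s) (gramian A2 B2 t s) $$ (i,j)
     = (if i < n then if j < n then gramian A1 B1 t s $$ (i,j) else 0
        else if j < n then 0 else gramian A2 B2 t s $$ (i - n, j - n))"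
    using i j by (subst dbl_index) (simp_all add: dA)
  have lhs: "gramian (dbl A1 A2) (dbl B1 B2) t s $$ (i,j)
      = integral {s..t} (\<lambda>\<tau>. integrand (dbl A1 A2) (dbl B1 B2) t \<tau> $$ (i,j))"
    by (rule gramian_index) (use i j dA in auto)
  show "gramian (dbl A1 A2) (dbl B1 B2) t s $$ (i,j) = dbl (gramian A1 B1 t s) (gramian A2 B2 t s) $$ (i,j)"
    unfolding lhs rhs ent
    using i j by (cases "i < n"; cases "j < n") (auto simp: gramian_index dA)
qed (use A1 A2 in auto)



lemma mult_entry:
  assumes "A \<in> carrier_mat n k" "B \<in> carrier_mat k m" "i < n" "j < m"
  shows "(A * B) $$ (i,j) = (\<Sum>l\<in>{0..<k}. A $$ (i,l) * B $$ (l,j))"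
  using assms by (auto simp: scalar_prod_def)

lemma shift_carrier: "shift_block p \<in> carrier_mat p p" unfolding shift_block_def by simp

lemma shift_pow:
  "(c \<cdot>\<^sub>m shift_block p) ^\<^sub>m k = mat p p (\<lambda>(i,j). if j = i + k then c^k else 0)"
proof (induction k)
  case 0
  show ?case by (rule eq_matI) (auto simp: shift_block_def)
next
  case (Suc k)
  let ?M = "c \<cdot>\<^sub>m shift_block p"
  have M: "?M \<in> carrier_mat p p" using shift_carrier by simp
  show ?case
  proof (rule eq_matI)
    fix i j assume "i < dim_row (mat p p (\<lambda>(i,j). if j = i + Suc k then c^Suc k else 0))"
      "j < dim_col (mat p p (\<lambda>(i,j). if j = i + Suc k then c^Suc k else 0))"
    hence i: "i < p" and j: "j < p" by auto
    have "(?M ^\<^sub>m Suc k) $$ (i,j) = (\<Sum>l\<in>{0..<p}. (?M ^\<^sub>m k) $$ (i,l) * ?M $$ (l,j))"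
      unfolding pow_mat.simps(2) by (rule mult_entry[OF pow_carrier_mat[OF M] M i j])
    also have "\<dots> = (\<Sum>l\<in>{0..<p}. if l = i + k then c^k * (c * (if j = i + k + 1 then 1 else 0)) else 0)"
    proof (intro sum.cong refl)
      fix l assume l: "l \<in> {0..<p}"
      have Mij: "?M $$ (l,j) = c * (if j = l + 1 then 1 else 0)"
        using l j by (simp add: shift_block_def)
      show "(?M ^\<^sub>m k) $$ (i,l) * ?M $$ (l,j) = (if l = i + k then c^k * (c * (if j = i + k + 1 then 1 else 0)) else 0)"
        unfolding Mij Suc.IH using i l by auto
    qed
    also have "\<dots> = (if j = i + Suc k then c^Suc k else 0)"
      using j by (auto simp: sum.delta)
    finally show "(?M ^\<^sub>m Suc k) $$ (i,j) = mat p p (\<lambda>(i,j). if j = i + Suc k then c^Suc k else 0) $$ (i,j)"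
      using i j by simp
  qed (use M in auto)
qed

lemma shiftT: "transpose_mat (shift_block p) = mat p p (\<lambda>(i,j). if i = j + 1 then 1 else 0)"
  by (rule eq_matI) (auto simp: shift_block_def)

lemma shiftT_pow:
  "(c \<cdot>\<^sub>m transpose_mat (shift_block p)) ^\<^sub>m k = mat p p (\<lambda>(i,j). if i = j + k then c^k else 0)"
proof (induction k)
  case 0
  show ?case by (rule eq_matI) (auto simp: shiftT)
next
  case (Suc k)
  let ?M = "c \<cdot>\<^sub>m transpose_mat (shift_block p)"
  have M: "?M \<in> carrier_mat p p" using shift_carrier by simp
  show ?case
  proof (rule eq_matI)
    fix i j assume "i < dim_row (mat p p (\<lambda>(i,j). if i = j + Suc k then c^Suc k else 0))"
      "j < dim_col (mat p p (\<lambda>(i,j). if i = j + Suc k then c^Suc k else 0))"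
    hence i: "i < p" and j: "j < p" by auto
    have "(?M ^\<^sub>m Suc k) $$ (i,j) = (\<Sum>l\<in>{0..<p}. (?M ^\<^sub>m k) $$ (i,l) * ?M $$ (l,j))"
      unfolding pow_mat.simps(2) by (rule mult_entry[OF pow_carrier_mat[OF M] M i j])
    also have "\<dots> = (\<Sum>l\<in>{0..<p}. if l = j + 1 then (if i = l + k then c^k else 0) * c else 0)"
    proof (intro sum.cong refl)
      fix l assume l: "l \<in> {0..<p}"
      have Mij: "?M $$ (l,j) = c * (if l = j + 1 then 1 else 0)"
        using l j by (simp add: shiftT)
      show "(?M ^\<^sub>m k) $$ (i,l) * ?M $$ (l,j) = (if l = j + 1 then (if i = l + k then c^k else 0) * c else 0)"
        unfolding Mij Suc.IH using i l by auto
    qed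
    also have "\<dots> = (if i = j + Suc k then c^Suc k else 0)"
      using i by (auto simp: sum.delta)
    finally show "(?M ^\<^sub>m Suc k) $$ (i,j) = mat p p (\<lambda>(i,j). if i = j + Suc k then c^Suc k else 0) $$ (i,j)"
      using i j by simp
  qed (use M in auto)
qed

lemma suminf_single': "(\<Sum>k. if k = d then x else 0) = (x :: real)"
  using sums_single[of d "\<lambda>_. x"] by (rule sums_unique[symmetric])

lemma mexp_shift:
  "mat_exp (c \<cdot>\<^sub>m shift_block p) = mat p p (\<lambda>(i,j). if i \<le> j then c^(j-i)/fact (j-i) else 0)"
proof (rule eq_matI)
  fix i j assume "i < dim_row (mat p p (\<lambda>(i,j). if i \<le> j then c^(j-i)/fact (j-i) else (0::real)))"
      "j < dim_col (mat p p (\<lambda>(i,j). if i \<le> j then c^(j-i)/fact (j-i) else (0::real)))"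
  hence i: "i < p" and j: "j < p" by auto
  have "mat_exp (c \<cdot>\<^sub>m shift_block p) $$ (i,j) = (\<Sum>k. (if j = i + k then c^k else 0) / fact k)"
    unfolding mat_exp_def shift_pow using i j by (simp add: shift_block_def)
  also have "\<dots> = (if i \<le> j then c^(j-i)/fact (j-i) else 0)"
  proof (cases "i \<le> j")
    case True
    have "(\<lambda>k. (if j = i + k then c^k else 0) / fact k) = (\<lambda>k. if k = j - i then c^(j-i)/fact (j-i) else 0)"
      using True by auto
    thus ?thesis using True by (simp add: suminf_single')
  next
    case False
    have "(\<lambda>k. (if j = i + k then c^k else 0) / fact k) = (\<lambda>k. 0)" using False by auto
    thus ?thesis using False by simp
  qed
  finally show "mat_exp (c \<cdot>\<^sub>m shift_block p) $$ (i,j) = mat p p (\<lambda>(i,j). if i \<le> j then c^(j-i)/fact (j-i) else 0) $$ (i,j)"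
    using i j by simp
qed (auto simp: shift_block_def)

lemma mexp_shiftT:
  "mat_exp (c \<cdot>\<^sub>m transpose_mat (shift_block p)) = mat p p (\<lambda>(i,j). if j \<le> i then c^(i-j)/fact (i-j) else 0)"
proof (rule eq_matI)
  fix i j assume "i < dim_row (mat p p (\<lambda>(i,j). if j \<le> i then c^(i-j)/fact (i-j) else (0::real)))"
      "j < dim_col (mat p p (\<lambda>(i,j). if j \<le> i then c^(i-j)/fact (i-j) else (0::real)))"
  hence i: "i < p" and j: "j < p" by auto
  have "mat_exp (c \<cdot>\<^sub>m transpose_mat (shift_block p)) $$ (i,j) = (\<Sum>k. (if i = j + k then c^k else 0) / fact k)"
    unfolding mat_exp_def shiftT_pow using i j by (simp add: shift_block_def)
  also have "\<dots> = (if j \<le> i then c^(i-j)/fact (i-j) else 0)"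
  proof (cases "j \<le> i")
    case True
    have "(\<lambda>k. (if i = j + k then c^k else 0) / fact k) = (\<lambda>k. if k = i - j then c^(i-j)/fact (i-j) else 0)"
      using True by auto
    thus ?thesis using True by (simp add: suminf_single')
  next
    case False
    have "(\<lambda>k. (if i = j + k then c^k else 0) / fact k) = (\<lambda>k. 0)" using False by auto
    thus ?thesis using False by simp
  qed
  finally show "mat_exp (c \<cdot>\<^sub>m transpose_mat (shift_block p)) $$ (i,j) = mat p p (\<lambda>(i,j). if j \<le> i then c^(i-j)/fact (i-j) else 0) $$ (i,j)"
    using i j by simp
qed (auto simp: shift_block_def)



lemma lbc_carrier: "last_basis_col p \<in> carrier_mat p 1" unfolding last_basis_col_def by simp

lemma integrand_block:
  assumes p: "p > 0"
  shows "integrand (shift_block p) (last_basis_col p) t \<tau>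
     = mat p p (\<lambda>(i,j). (t-\<tau>)^(p-1-i)/fact (p-1-i) * ((t-\<tau>)^(p-1-j)/fact (p-1-j)))"
proof -
  let ?c = "t - \<tau>"
  let ?E = "mat_exp (?c \<cdot>\<^sub>m shift_block p)"
  let ?E' = "mat_exp (?c \<cdot>\<^sub>m transpose_mat (shift_block p))"
  let ?L = "last_basis_col p"
  define v where "v i = ?c^(p-1-i)/fact (p-1-i)" for i
  have E: "?E \<in> carrier_mat p p" unfolding mexp_shift by simp
  have E': "?E' \<in> carrier_mat p p" unfolding mexp_shiftT by simp
  have L: "?L \<in> carrier_mat p 1" by (rule lbc_carrier)
  have LT: "transpose_mat ?L \<in> carrier_mat 1 p" using L by simp
  have EL: "?E * ?L \<in> carrier_mat p 1" using E L by simp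
  have ELL: "?E * ?L * transpose_mat ?L \<in> carrier_mat p p" using EL LT by simp
  have Lent: "?L $$ (l,0) = (if l = p - 1 then 1 else 0)" if "l < p" for l
    using that unfolding last_basis_col_def by simp
  have h1: "(?E * ?L) $$ (i,0) = v i" if i: "i < p" for i
  proof -
    have "(?E * ?L) $$ (i,0) = (\<Sum>l\<in>{0..<p}. ?E $$ (i,l) * ?L $$ (l,0))"
      by (rule mult_entry[OF E L i]) simp
    also have "\<dots> = (\<Sum>l\<in>{0..<p}. if l = p - 1 then ?E $$ (i,p-1) else 0)"
      by (intro sum.cong refl) (simp add: Lent)
    also have "\<dots> = ?E $$ (i,p-1)" using p by (simp add: sum.delta)
    also have "\<dots> = v i" unfolding mexp_shift v_def using i p by simp
    finally show ?thesis .
  qed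
  have h2: "(?E * ?L * transpose_mat ?L) $$ (i,l) = v i * (if l = p - 1 then 1 else 0)"
    if i: "i < p" and l: "l < p" for i l
  proof -
    have "(?E * ?L * transpose_mat ?L) $$ (i,l) = (\<Sum>q\<in>{0..<1}. (?E * ?L) $$ (i,q) * transpose_mat ?L $$ (q,l))"
      by (rule mult_entry[OF EL LT i l])
    also have "\<dots> = (?E * ?L) $$ (i,0) * ?L $$ (l,0)" using l L by simp
    finally show ?thesis using h1[OF i] Lent[OF l] by simp
  qed
  show ?thesis
  proof (rule eq_matI)
    fix i j assume "i < dim_row (mat p p (\<lambda>(i,j). (t-\<tau>)^(p-1-i)/fact (p-1-i) * ((t-\<tau>)^(p-1-j)/fact (p-1-j))))"
      "j < dim_col (mat p p (\<lambda>(i,j). (t-\<tau>)^(p-1-i)/fact (p-1-i) * ((t-\<tau>)^(p-1-j)/fact (p-1-j))))"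
    hence i: "i < p" and j: "j < p" by auto
    have "integrand (shift_block p) (last_basis_col p) t \<tau> $$ (i,j)
        = (\<Sum>l\<in>{0..<p}. (?E * ?L * transpose_mat ?L) $$ (i,l) * ?E' $$ (l,j))"
      unfolding integrand_def by (rule mult_entry[OF ELL E' i j])
    also have "\<dots> = (\<Sum>l\<in>{0..<p}. if l = p - 1 then v i * ?E' $$ (p-1,j) else 0)"
      by (intro sum.cong refl) (simp add: h2 i)
    also have "\<dots> = v i * ?E' $$ (p-1,j)" using p by (simp add: sum.delta)
    also have "\<dots> = v i * v j" unfolding mexp_shiftT v_def using j p by simp
    finally show "integrand (shift_block p) (last_basis_col p) t \<tau> $$ (i,j)
      = mat p p (\<lambda>(i,j). (t-\<tau>)^(p-1-i)/fact (p-1-i) * ((t-\<tau>)^(p-1-j)/fact (p-1-j))) $$ (i,j)"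
      using i j unfolding v_def by simp
  qed (use ELL E' in \<open>auto simp: integrand_def\<close>)
qed


lemma has_integral_pow:
  assumes "s \<le> t"
  shows "((\<lambda>\<tau>. (t - \<tau>)^n) has_integral ((t - s)^(n+1) / real (n+1))) {s..t}"
proof -
  let ?F = "\<lambda>y. - ((t - y)^(n+1)) / real (n+1)"
  have d: "(?F has_vector_derivative (t - x)^n) (at x within {s..t})" for x
  proof -
    have "(?F has_real_derivative (t - x)^n) (at x within {s..t})"
      by (rule derivative_eq_intros refl | simp)+
    thus ?thesis by (simp add: has_real_derivative_iff_has_vector_derivative)
  qed
  have "((\<lambda>\<tau>. (t - \<tau>)^n) has_integral (?F t - ?F s)) {s..t}"
    by (rule fundamental_theorem_of_calculus[OF assms]) (use d in auto)
  thus ?thesis by simp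
qed

lemma gramian_block:
  assumes st: "s < t"
  shows "gramian (shift_block p) (last_basis_col p) t s = Gm p (t - s)"
proof (cases "p = 0")
  case True
  show ?thesis by (rule eq_matI) (auto simp: True gramian_def Gm_def shift_block_def)
next
  case False
  hence p: "p > 0" by simp
  show ?thesis
  proof (rule eq_matI)
    fix i j assume "i < dim_row (Gm p (t - s))" "j < dim_col (Gm p (t - s))"
    hence i: "i < p" and j: "j < p" by auto
    let ?a = "p - 1 - i" and ?b = "p - 1 - j"
    let ?K = "1 / (fact ?a * fact ?b) :: real"
    have ig: "((\<lambda>\<tau>. (t - \<tau>)^(?a + ?b) * ?K) has_integral ((t - s)^(?a + ?b + 1) / real (?a + ?b + 1) * ?K)) {s..t}"
      by (rule has_integral_mult_left[OF has_integral_pow]) (use st in simp)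
    have "gramian (shift_block p) (last_basis_col p) t s $$ (i,j)
        = integral {s..t} (\<lambda>\<tau>. integrand (shift_block p) (last_basis_col p) t \<tau> $$ (i,j))"
      by (rule gramian_index) (use i j in \<open>auto simp: shift_block_def\<close>)
    also have "\<dots> = integral {s..t} (\<lambda>\<tau>. (t - \<tau>)^(?a + ?b) * ?K)"
    proof (intro arg_cong[where f="integral {s..t}"] ext)
      fix \<tau>
      have "integrand (shift_block p) (last_basis_col p) t \<tau> $$ (i,j) = (t-\<tau>)^?a/fact ?a * ((t-\<tau>)^?b/fact ?b)"
        unfolding integrand_block[OF p] using i j by simp
      also have "\<dots> = (t - \<tau>)^(?a + ?b) * ?K" by (simp add: power_add)
      finally show "integrand (shift_block p) (last_basis_col p) t \<tau> $$ (i,j) = (t - \<tau>)^(?a + ?b) * ?K" .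
    qed
    also have "\<dots> = (t - s)^(?a + ?b + 1) / real (?a + ?b + 1) * ?K"
      by (rule integral_unique[OF ig])
    also have "\<dots> = Gm p (t - s) $$ (i,j)"
    proof -
      have "Gm p (t - s) $$ (i,j) = Gx (t - s) ?a ?b" unfolding Gm_def using i j by simp
      thus ?thesis unfolding Gx_def by (simp only: divide_divide_eq_left times_divide_eq_right mult_1_right mult.assoc)
    qed
    finally show "gramian (shift_block p) (last_basis_col p) t s $$ (i,j) = Gm p (t - s) $$ (i,j)" .
  qed (auto simp: shift_block_def)
qed



lemma dbl_carrier:
  assumes X: "X \<in> carrier_mat a b" and Y: "Y \<in> carrier_mat c d"
  shows "dbl X Y \<in> carrier_mat (a + c) (b + d)"
  by (rule carrier_matI) (simp_all add: carrier_matD[OF X] carrier_matD[OF Y])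

lemma brun_A_Cons: "brun_A (p # ps) = dbl (shift_block p) (brun_A ps)"
  unfolding brun_A_def list.map by (rule diag_block_Cons)

lemma brun_B_Cons: "brun_B (p # ps) = dbl (last_basis_col p) (brun_B ps)"
  unfolding brun_B_def list.map by (rule diag_block_Cons)

lemma brun_A_carrier: "brun_A ps \<in> carrier_mat (sum_list ps) (sum_list ps)"
proof (induction ps)
  case Nil show ?case by (simp add: brun_A_def)
next
  case (Cons p ps)
  have "dbl (shift_block p) (brun_A ps) \<in> carrier_mat (p + sum_list ps) (p + sum_list ps)"
    by (rule dbl_carrier[OF shift_carrier Cons])
  thus ?case by (simp add: brun_A_Cons)
qed

lemma brun_B_carrier: "brun_B ps \<in> carrier_mat (sum_list ps) (length ps)"
proof (induction ps)
  case Nil show ?case by (simp add: brun_B_def)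
next
  case (Cons p ps)
  have "dbl (last_basis_col p) (brun_B ps) \<in> carrier_mat (p + sum_list ps) (1 + length ps)"
    by (rule dbl_carrier[OF lbc_carrier Cons])
  thus ?case by (simp add: brun_B_Cons)
qed

lemma gram_diag:
  assumes st: "s < t"
  shows "gramian (brun_A ps) (brun_B ps) t s = diag_block_mat (map (\<lambda>p. Gm p (t - s)) ps)"
proof (induction ps)
  case Nil
  show ?case by (rule eq_matI) (auto simp: brun_A_def gramian_def)
next
  case (Cons p ps)
  have "gramian (brun_A (p # ps)) (brun_B (p # ps)) t s
      = dbl (gramian (shift_block p) (last_basis_col p) t s) (gramian (brun_A ps) (brun_B ps) t s)"
    unfolding brun_A_Cons brun_B_Cons
    by (rule gramian_dbl[OF shift_carrier brun_A_carrier lbc_carrier brun_B_carrier])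
  also have "\<dots> = diag_block_mat (map (\<lambda>p. Gm p (t - s)) (p # ps))"
    unfolding gramian_block[OF st] Cons list.map diag_block_Cons ..
  finally show ?case .
qed

lemma diag_Gm_carrier: "diag_block_mat (map (\<lambda>p. Gm p T) ps) \<in> carrier_mat (sum_list ps) (sum_list ps)"
proof (induction ps)
  case Nil show ?case by simp
next
  case (Cons p ps)
  show ?case unfolding list.map diag_block_Cons using dbl_carrier[OF Gm_carrier Cons] by simp
qed

lemma diag_inv_carrier: "diag_block_mat (map (\<lambda>p. inv_block p t s) ps) \<in> carrier_mat (sum_list ps) (sum_list ps)"
proof (induction ps)
  case Nil show ?case by simp
next
  case (Cons p ps)
  show ?case unfolding list.map diag_block_Cons using dbl_carrier[OF inv_block_carrier Cons] by simp
qed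

lemma diag_mult1:
  assumes st: "s < t"
  shows "diag_block_mat (map (\<lambda>p. Gm p (t - s)) ps) * diag_block_mat (map (\<lambda>p. inv_block p t s) ps) = 1\<^sub>m (sum_list ps)"
proof (induction ps)
  case Nil show ?case by (rule eq_matI) auto
next
  case (Cons p ps)
  have "dbl (Gm p (t - s)) (diag_block_mat (map (\<lambda>p. Gm p (t - s)) ps)) * dbl (inv_block p t s) (diag_block_mat (map (\<lambda>p. inv_block p t s) ps))
     = dbl (Gm p (t - s) * inv_block p t s) (diag_block_mat (map (\<lambda>p. Gm p (t - s)) ps) * diag_block_mat (map (\<lambda>p. inv_block p t s) ps))"
    by (rule dbl_mult) (simp_all add: carrier_matD[OF diag_Gm_carrier] carrier_matD[OF diag_inv_carrier])
  thus ?case unfolding list.map diag_block_Cons Cons Gm_inv[OF st] by (simp add: dbl_one)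
qed

lemma diag_mult2:
  assumes st: "s < t"
  shows "diag_block_mat (map (\<lambda>p. inv_block p t s) ps) * diag_block_mat (map (\<lambda>p. Gm p (t - s)) ps) = 1\<^sub>m (sum_list ps)"
proof (induction ps)
  case Nil show ?case by (rule eq_matI) auto
next
  case (Cons p ps)
  have "dbl (inv_block p t s) (diag_block_mat (map (\<lambda>p. inv_block p t s) ps)) * dbl (Gm p (t - s)) (diag_block_mat (map (\<lambda>p. Gm p (t - s)) ps))
     = dbl (inv_block p t s * Gm p (t - s)) (diag_block_mat (map (\<lambda>p. inv_block p t s) ps) * diag_block_mat (map (\<lambda>p. Gm p (t - s)) ps))"
    by (rule dbl_mult) (simp_all add: carrier_matD[OF diag_Gm_carrier] carrier_matD[OF diag_inv_carrier])
  thus ?case unfolding list.map diag_block_Cons Cons inv_Gm[OF st] by (simp add: dbl_one)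
qed

lemma det_dbl:
  assumes "X \<in> carrier_mat n n" "Y \<in> carrier_mat m m"
  shows "Determinant.det (dbl X Y) = Determinant.det X * Determinant.det Y"
  unfolding dbl_def using assms
  by (intro det_four_block_mat_upper_right_zero[of _ n _ m]) auto

lemma det_diag:
  "Determinant.det (diag_block_mat (map (\<lambda>p. Gm p T) ps)) = (\<Prod>k<length ps. Determinant.det (Gm (ps ! k) T))"
proof (induction ps)
  case Nil show ?case by simp
next
  case (Cons p ps)
  have "Determinant.det (diag_block_mat (map (\<lambda>p. Gm p T) (p # ps)))
      = Determinant.det (Gm p T) * Determinant.det (diag_block_mat (map (\<lambda>p. Gm p T) ps))"
    unfolding list.map diag_block_Cons by (rule det_dbl[OF Gm_carrier diag_Gm_carrier])
  also have "\<dots> = (\<Prod>k<length (p # ps). Determinant.det (Gm ((p # ps) ! k) T))"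
    unfolding Cons by (simp only: length_Cons prod.lessThan_Suc_shift nth_Cons_0 nth_Cons_Suc)
  finally show ?case .
qed



theorem theorem1:
  fixes ps :: "nat list" and s t :: real
  assumes "length ps \<ge> 1"
    and "\<forall>p\<in>set ps. p > 0"
    and "s < t"
  shows "\<exists>Ms. length Ms = length ps
     \<and> (\<forall>k<length ps. Ms ! k \<in> carrier_mat (ps ! k) (ps ! k))
     \<and> gramian (brun_A ps) (brun_B ps) t s = diag_block_mat Ms
     \<and> Determinant.det (gramian (brun_A ps) (brun_B ps) t s)
         = (\<Prod>k<length ps. (t - s) ^ ((ps ! k)\<^sup>2)
              * (\<Prod>r=1..ps ! k. Gamma (real r) / Gamma (real (ps ! k + r))))
     \<and> invertible_mat (gramian (brun_A ps) (brun_B ps) t s)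
     \<and> inverts_mat (gramian (brun_A ps) (brun_B ps) t s)
                   (diag_block_mat (map (\<lambda>p. inv_block p t s) ps))
     \<and> inverts_mat (diag_block_mat (map (\<lambda>p. inv_block p t s) ps))
                   (gramian (brun_A ps) (brun_B ps) t s)
     \<and> (\<forall>k<length ps. inverts_mat (Ms ! k) (inv_block (ps ! k) t s)
                      \<and> inverts_mat (inv_block (ps ! k) t s) (Ms ! k))"
proof -
  have st: "s < t" by fact
  let ?Ms = "map (\<lambda>p. Gm p (t - s)) ps"
  let ?G = "gramian (brun_A ps) (brun_B ps) t s"
  let ?N = "diag_block_mat (map (\<lambda>p. inv_block p t s) ps)"
  have G: "?G = diag_block_mat ?Ms" by (rule gram_diag[OF st])
  have Gc: "?G \<in> carrier_mat (sum_list ps) (sum_list ps)" unfolding G by (rule diag_Gm_carrier)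
  have Nc: "?N \<in> carrier_mat (sum_list ps) (sum_list ps)" by (rule diag_inv_carrier)
  have i1: "inverts_mat ?G ?N"
    unfolding inverts_mat_def carrier_matD[OF Gc] unfolding G by (rule diag_mult1[OF st])
  have i2: "inverts_mat ?N ?G"
    unfolding inverts_mat_def carrier_matD[OF Nc] unfolding G by (rule diag_mult2[OF st])
  have inv: "invertible_mat ?G"
    unfolding invertible_mat_def using i1 i2 Gc by (auto simp: square_mat.simps carrier_matD)
  have det: "Determinant.det ?G = (\<Prod>k<length ps. (t - s) ^ ((ps ! k)\<^sup>2)
              * (\<Prod>r=1..ps ! k. Gamma (real r) / Gamma (real (ps ! k + r))))"
    unfolding G det_diag det_Gm[OF st] Pg_def ..
  have blocks: "\<forall>k<length ps. inverts_mat (?Ms ! k) (inv_block (ps ! k) t s)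
                      \<and> inverts_mat (inv_block (ps ! k) t s) (?Ms ! k)"
    using Gm_inv[OF st] inv_Gm[OF st] by (simp add: inverts_mat_def)
  have carr: "\<forall>k<length ps. ?Ms ! k \<in> carrier_mat (ps ! k) (ps ! k)"
    by (simp add: Gm_carrier)
  show ?thesis
    by (rule exI[of _ ?Ms]) (use G det inv i1 i2 blocks carr in simp)
qed

end
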